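(* Let $G$ be a finite group with $d(G)\geq 2$, and assume that $G$ is $2$-flexible. Then $G$ is $1$-flexible if and only if $\mathrm{Cyc}(G)=1$.
   Context: For a finite group $H$, $d(H)$ denotes the minimal size of a generating set of $H$. For an integer $1 \leq k \leq d(G)$, $G$ is called $k$-flexible if for any $x_1,\dots,x_k \in G$ with $d(\langle x_1,\dots,x_k\rangle)=k$ there exist $x_{k+1},\dots,x_{d(G)} \in G$ such that $\langle x_1,\dots,x_{d(G)}\rangle = G$. The cycliciser of $G$ is $\mathrm{Cyc}(G) = \{c \in G \mid \langle c,g\rangle \text{ is cyclic for all } g \in G\}$. *)

theory Defs
  imports "HOL-Algebra.Algebra"
begin

definition gen_rank :: "('a, 'b) monoid_scheme \<Rightarrow> 'a set \<Rightarrow> nat" where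
  "gen_rank G H = (LEAST n. \<exists>S. S \<subseteq> H \<and> finite S \<and> card S = n \<and> generate G S = H)"

definition flexible :: "('a, 'b) monoid_scheme \<Rightarrow> nat \<Rightarrow> bool" where
  "flexible G k \<longleftrightarrow> 1 \<le> k \<and> k \<le> gen_rank G (carrier G) \<and>
     (\<forall>xs. length xs = k \<and> set xs \<subseteq> carrier G \<and> gen_rank G (generate G (set xs)) = k \<longrightarrow>
        (\<exists>ys. length ys = gen_rank G (carrier G) - k \<and> set ys \<subseteq> carrier G \<and>
              generate G (set (xs @ ys)) = carrier G))"

definition cyclic_sub :: "('a, 'b) monoid_scheme \<Rightarrow> 'a set \<Rightarrow> bool" where
  "cyclic_sub G H \<longleftrightarrow> (\<exists>h \<in> carrier G. generate G {h} = H)"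

definition cycliciser :: "('a, 'b) monoid_scheme \<Rightarrow> 'a set" where
  "cycliciser G = {c \<in> carrier G. \<forall>g \<in> carrier G. cyclic_sub G (generate G {c, g})}"

end

theory Submission
  imports Defs
begin

lemma gen_swap:
  assumes "group G" "A \<subseteq> carrier G" "A' \<subseteq> carrier G" "B \<subseteq> carrier G"
    and "generate G A = generate G A'"
  shows "generate G (A \<union> B) \<subseteq> generate G (A' \<union> B)"
proof -
  interpret group G by fact
  have sg: "subgroup (generate G (A' \<union> B)) G"
    using assms by (intro generate_is_subgroup) auto
  have i1: "A \<subseteq> generate G A" by (auto intro: generate.incl)
  have i2: "generate G A' \<subseteq> generate G (A' \<union> B)" by (rule mono_generate) auto
  have i3: "B \<subseteq> generate G (A' \<union> B)" by (auto intro: generate.incl)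
  have "A \<union> B \<subseteq> generate G (A' \<union> B)" using i1 i2 i3 assms(5) by auto
  then show ?thesis by (rule generate_subgroup_incl[OF _ sg])
qed

lemma rank_le:
  assumes "S \<subseteq> H" "finite S" "generate G S = H"
  shows "gen_rank G H \<le> card S"
  unfolding gen_rank_def by (rule Least_le) (use assms in blast)

lemma rank_ex:
  assumes "S \<subseteq> H" "finite S" "generate G S = H"
  shows "\<exists>S. S \<subseteq> H \<and> finite S \<and> card S = gen_rank G H \<and> generate G S = H"
  unfolding gen_rank_def by (rule LeastI_ex) (use assms in blast)

lemma rank_single:
  assumes "group G" "c \<in> carrier G" "c \<noteq> \<one>\<^bsub>G\<^esub>"
  shows "gen_rank G (generate G {c}) = 1"
proof -
  interpret group G by fact
  have c: "c \<in> generate G {c}" by (rule generate.incl) simp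
  have le: "gen_rank G (generate G {c}) \<le> 1"
    using rank_le[of "{c}" "generate G {c}" G] c by auto
  obtain S where S: "S \<subseteq> generate G {c}" "finite S" "card S = gen_rank G (generate G {c})"
    "generate G S = generate G {c}"
    using rank_ex[of "{c}" "generate G {c}" G] c by auto
  have "gen_rank G (generate G {c}) \<noteq> 0"
  proof
    assume "gen_rank G (generate G {c}) = 0"
    then have "S = {}" using S by auto
    then show False using S(4) c assms(3) generate_empty by auto
  qed
  with le show ?thesis by linarith
qed

lemma rank_pair:
  assumes "group G" "x \<in> carrier G" "g \<in> carrier G"
    and "\<not> cyclic_sub G (generate G {x, g})"
  shows "gen_rank G (generate G {x, g}) = 2"
proof -
  interpret group G by fact
  have xg: "{x,g} \<subseteq> generate G {x, g}" by (auto intro: generate.incl)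
  have "gen_rank G (generate G {x, g}) \<le> card {x,g}"
    using rank_le[of "{x,g}" "generate G {x,g}" G] xg by auto
  also have "\<dots> \<le> 2" by (simp add: card_insert_le_m1)
  finally have le: "gen_rank G (generate G {x, g}) \<le> 2" .
  obtain S where S: "S \<subseteq> generate G {x,g}" "finite S" "card S = gen_rank G (generate G {x,g})"
    "generate G S = generate G {x,g}"
    using rank_ex[of "{x,g}" "generate G {x,g}" G] xg by auto
  have sub: "generate G {x,g} \<subseteq> carrier G" using assms by (intro generate_incl) auto
  have "\<not> card S \<le> 1"
  proof
    assume "card S \<le> 1"
    then have "card S = 0 \<or> card S = 1" by linarith
    then show False
    proof
      assume "card S = 0"
      then have "S = {}" using S by auto
      then have "generate G {x,g} = generate G {\<one>\<^bsub>G\<^esub>}" using S(4) generate_empty generate_one by auto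
      then show False using assms(4) unfolding cyclic_sub_def by (metis one_closed)
    next
      assume "card S = 1"
      then obtain h where "S = {h}" using card_1_singletonE by blast
      then have "h \<in> carrier G" "generate G {h} = generate G {x,g}" using S sub by auto
      then show False using assms(4) unfolding cyclic_sub_def by blast
    qed
  qed
  with le S(3) show ?thesis by linarith
qed

theorem lemma2p5:
  fixes G :: "('a, 'b) monoid_scheme"
  assumes "group G" and "finite (carrier G)"
    and "gen_rank G (carrier G) \<ge> 2"
    and "flexible G 2"
  shows "flexible G 1 \<longleftrightarrow> cycliciser G = {\<one>\<^bsub>G\<^esub>}"
proof -
  interpret group G by fact
  define d where "d = gen_rank G (carrier G)"
  have d2: "d \<ge> 2" using assms(3) d_def by simp
  have one_in: "\<one>\<^bsub>G\<^esub> \<in> cycliciser G"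
  proof -
    have "cyclic_sub G (generate G {\<one>\<^bsub>G\<^esub>, g})" if "g \<in> carrier G" for g
    proof -
      have "generate G {\<one>\<^bsub>G\<^esub>, g} = generate G {g}"
      proof
        show "generate G {\<one>\<^bsub>G\<^esub>, g} \<subseteq> generate G {g}"
          using gen_swap[OF assms(1), of "{\<one>\<^bsub>G\<^esub>}" "{}" "{g}"] that generate_one generate_empty by (simp add: insert_commute)
        show "generate G {g} \<subseteq> generate G {\<one>\<^bsub>G\<^esub>, g}" by (rule mono_generate) auto
      qed
      then show ?thesis unfolding cyclic_sub_def using that by auto
    qed
    then show ?thesis unfolding cycliciser_def by auto
  qed
  show ?thesis
  proof
    assume f1: "flexible G 1"
    show "cycliciser G = {\<one>\<^bsub>G\<^esub>}"
    proof (rule ccontr)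
      assume "cycliciser G \<noteq> {\<one>\<^bsub>G\<^esub>}"
      then obtain c where c: "c \<in> cycliciser G" "c \<noteq> \<one>\<^bsub>G\<^esub>" using one_in by blast
      have cG: "c \<in> carrier G" using c unfolding cycliciser_def by auto
      have "gen_rank G (generate G (set [c])) = 1" using rank_single[OF assms(1) cG c(2)] by simp
      moreover have fl: "\<And>xs. length xs = 1 \<and> set xs \<subseteq> carrier G \<and> gen_rank G (generate G (set xs)) = 1 \<Longrightarrow>
           (\<exists>ys. length ys = d - 1 \<and> set ys \<subseteq> carrier G \<and> generate G (set (xs @ ys)) = carrier G)"
        using f1 unfolding flexible_def d_def by blast
      moreover have "length [c] = 1" "set [c] \<subseteq> carrier G" using cG by auto
      ultimately obtain ys where ys: "length ys = d - 1" "set ys \<subseteq> carrier G"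
        "generate G (set ([c] @ ys)) = carrier G"
        by blast
      then obtain y ys' where yy: "ys = y # ys'" using d2 by (cases ys) auto
      have yG: "y \<in> carrier G" using ys yy by auto
      obtain z where z: "z \<in> carrier G" "generate G {z} = generate G {c, y}"
        using c(1) yG unfolding cycliciser_def cyclic_sub_def by auto
      have "carrier G = generate G ({c, y} \<union> set ys')" using ys(3) yy by simp
      also have "\<dots> \<subseteq> generate G ({z} \<union> set ys')"
        using gen_swap[OF assms(1), of "{c,y}" "{z}" "set ys'"] z cG yG ys yy by auto
      finally have eq: "generate G ({z} \<union> set ys') = carrier G"
        using generate_incl[of "{z} \<union> set ys'"] z ys yy by auto
      have "d \<le> card ({z} \<union> set ys')"
        unfolding d_def using rank_le[of "{z} \<union> set ys'" "carrier G" G] eq z ys yy by auto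
      also have "\<dots> \<le> 1 + length ys'"
        using card_length[of ys'] card_Un_le[of "{z}" "set ys'"] by auto
      also have "\<dots> = d - 1" using ys yy by simp
      finally show False using d2 by linarith
    qed
  next
    assume cy: "cycliciser G = {\<one>\<^bsub>G\<^esub>}"
    show "flexible G 1" unfolding flexible_def
    proof (intro conjI allI impI)
      show "1 \<le> (1::nat)" by simp
      show "1 \<le> gen_rank G (carrier G)" using assms(3) by simp
      fix xs :: "'a list"
      assume h: "length xs = 1 \<and> set xs \<subseteq> carrier G \<and> gen_rank G (generate G (set xs)) = 1"
      then obtain x where x: "xs = [x]" by (cases xs) auto
      have xG: "x \<in> carrier G" using h x by auto
      have "x \<noteq> \<one>\<^bsub>G\<^esub>"
      proof
        assume "x = \<one>\<^bsub>G\<^esub>"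
        then have "generate G (set xs) = generate G {}" using x generate_one generate_empty by simp
        then have "gen_rank G (generate G (set xs)) = 0"
          using rank_le[of "{}" "generate G {}" G] by simp
        then show False using h by simp
      qed
      then have "x \<notin> cycliciser G" using cy by auto
      then obtain g where g: "g \<in> carrier G" "\<not> cyclic_sub G (generate G {x, g})"
        using xG unfolding cycliciser_def by auto
      have "gen_rank G (generate G (set [x, g])) = 2" using rank_pair[OF assms(1) xG g] by simp
      moreover have "length [x, g] = 2" "set [x, g] \<subseteq> carrier G" using xG g(1) by auto
      ultimately obtain ys where ys: "length ys = d - 2" "set ys \<subseteq> carrier G"
        "generate G (set ([x, g] @ ys)) = carrier G"
        using assms(4) unfolding flexible_def d_def by blast
      show "\<exists>ys. length ys = gen_rank G (carrier G) - 1 \<and> set ys \<subseteq> carrier G \<and>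
              generate G (set (xs @ ys)) = carrier G"
        apply (rule exI[of _ "g # ys"])
        using ys x g(1) d2 unfolding d_def by auto
    qed
  qed
qed

end
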